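(* Let $R$ be a commutative ring, $n$ a positive integer, and $x_1,\dots,x_{n+1}\in J(R)$. Then the ideal $x_1\cdots x_{n+1}R$ is a weakly $n$-absorbing ideal of $R$ if and only if $x_1\cdots x_{n+1}=0$.
   Context: All rings are commutative with $1\neq0$. $J(R)$ denotes the intersection of all maximal ideals of $R$. A proper ideal $I$ of $R$ is weakly $n$-absorbing if whenever $0\neq a_1\cdots a_{n+1}\in I$ with $a_1,\dots,a_{n+1}\in R$, there are $n$ of the $a_i$'s whose product is in $I$. *)

theory Defs
  imports Main
begin

definition is_ideal :: "'a::comm_ring_1 set \<Rightarrow> bool" where
  "is_ideal I \<longleftrightarrow> 0 \<in> I \<and> (\<forall>a\<in>I. \<forall>b\<in>I. a + b \<in> I) \<and> (\<forall>r a. a \<in> I \<longrightarrow> r * a \<in> I)"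

definition maximal_ideal :: "'a::comm_ring_1 set \<Rightarrow> bool" where
  "maximal_ideal M \<longleftrightarrow> is_ideal M \<and> M \<noteq> UNIV \<and>
     (\<forall>J. is_ideal J \<and> M \<subseteq> J \<longrightarrow> J = M \<or> J = UNIV)"

definition jacobson :: "'a::comm_ring_1 set" where
  "jacobson = \<Inter> {M. maximal_ideal M}"

definition principal_ideal :: "'a::comm_ring_1 \<Rightarrow> 'a set" where
  "principal_ideal c = {c * r | r. True}"

definition weakly_n_absorbing :: "nat \<Rightarrow> 'a::comm_ring_1 set \<Rightarrow> bool" where
  "weakly_n_absorbing n I \<longleftrightarrow> is_ideal I \<and> I \<noteq> UNIV \<and>
     (\<forall>a :: nat \<Rightarrow> 'a. (\<Prod>i<Suc n. a i) \<noteq> 0 \<and> (\<Prod>i<Suc n. a i) \<in> I \<longrightarrow>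
        (\<exists>j<Suc n. (\<Prod>i\<in>{..<Suc n} - {j}. a i) \<in> I))"

end

theory Submission
  imports Defs
begin

lemma krull:
  fixes u :: "'a::comm_ring_1"
  assumes "\<not> (\<exists>v. u * v = 1)"
  shows "\<exists>M. maximal_ideal M \<and> u \<in> M"
proof -
  define A where "A = {I::'a set. is_ideal I \<and> u \<in> I \<and> 1 \<notin> I}"
  have P: "principal_ideal u \<in> A"
    unfolding A_def principal_ideal_def is_ideal_def
    using assms
    apply auto
      apply (rule exI[of _ 0], simp)
     apply (metis distrib_left)
    apply (metis mult.left_commute)
    apply (rule exI[of _ 1], simp)
    done
  have "\<forall>C\<in>chains A. \<exists>U\<in>A. \<forall>X\<in>C. X \<subseteq> U"
  proof
    fix C assume C: "C \<in> chains A"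
    show "\<exists>U\<in>A. \<forall>X\<in>C. X \<subseteq> U"
    proof (cases "C = {}")
      case True then show ?thesis using P by auto
    next
      case False
      have CA: "C \<subseteq> A" and ch: "\<forall>X\<in>C. \<forall>Y\<in>C. X \<subseteq> Y \<or> Y \<subseteq> X"
        using C unfolding chains_def chain_subset_def by auto
      have "\<Union>C \<in> A"
      proof -
        obtain X0 where X0: "X0 \<in> C" using False by auto
        have i: "is_ideal X" "u \<in> X" "1 \<notin> X" if "X \<in> C" for X
          using CA that unfolding A_def by auto
        have "0 \<in> \<Union>C" using i(1)[OF X0] X0 unfolding is_ideal_def by auto
        moreover have "a + b \<in> \<Union>C" if ab: "a \<in> \<Union>C" "b \<in> \<Union>C" for a b
        proof -
          obtain X Y where "X \<in> C" "Y \<in> C" "a \<in> X" "b \<in> Y" using ab by (meson UnionE)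
          then show ?thesis using ch i(1) unfolding is_ideal_def by (metis UnionI subsetD)
        qed
        moreover have "r * a \<in> \<Union>C" if "a \<in> \<Union>C" for r a
          using that i(1) unfolding is_ideal_def by blast
        moreover have "u \<in> \<Union>C" using i(2) X0 by auto
        moreover have "1 \<notin> \<Union>C" using i(3) by auto
        ultimately show ?thesis unfolding A_def is_ideal_def by auto
      qed
      then show ?thesis by auto
    qed
  qed
  from Zorn_Lemma2[OF this] obtain M where M: "M \<in> A" and mx: "\<forall>X\<in>A. M \<subseteq> X \<longrightarrow> X = M" by blast
  have "maximal_ideal M"
    unfolding maximal_ideal_def
  proof (intro conjI allI impI)
    show "is_ideal M" using M A_def by auto
    show "M \<noteq> UNIV" using M A_def by auto
    fix J assume J: "is_ideal J \<and> M \<subseteq> J"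
    show "J = M \<or> J = UNIV"
    proof (cases "1 \<in> J")
      case True
      then have "J = UNIV" using J unfolding is_ideal_def by (metis UNIV_eq_I mult.right_neutral)
      then show ?thesis by auto
    next
      case False
      then have "J \<in> A" using J M unfolding A_def by auto
      then show ?thesis using mx J by auto
    qed
  qed
  then show ?thesis using M A_def by auto
qed

lemma jac_unit:
  fixes x :: "'a::comm_ring_1"
  assumes "x \<in> jacobson"
  shows "\<exists>v. (1 - x * r) * v = 1"
proof (rule ccontr)
  assume "\<not> ?thesis"
  then obtain M where M: "maximal_ideal M" "1 - x * r \<in> M" using krull by blast
  have "x \<in> M" using assms M(1) unfolding jacobson_def by auto
  then have "x * r \<in> M" using M(1) unfolding maximal_ideal_def is_ideal_def by (metis mult.commute)
  then have "(1 - x*r) + x * r \<in> M" using M unfolding maximal_ideal_def is_ideal_def by blast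
  then have "1 \<in> M" by simp
  then have "M = UNIV" using M(1) unfolding maximal_ideal_def is_ideal_def by (metis UNIV_eq_I mult.right_neutral)
  then show False using M(1) unfolding maximal_ideal_def by auto
qed

theorem mainTheorem18:
  fixes x :: "nat \<Rightarrow> 'a::comm_ring_1" and n :: nat
  assumes "n \<ge> 1"
    and "\<forall>i<Suc n. x i \<in> jacobson"
  shows "weakly_n_absorbing n (principal_ideal (\<Prod>i<Suc n. x i)) \<longleftrightarrow> (\<Prod>i<Suc n. x i) = 0"
proof
  assume w: "weakly_n_absorbing n (principal_ideal (\<Prod>i<Suc n. x i))"
  show "(\<Prod>i<Suc n. x i) = 0"
  proof (rule ccontr)
    let ?c = "\<Prod>i<Suc n. x i"
    assume nz: "?c \<noteq> 0"
    have "?c \<in> principal_ideal ?c" unfolding principal_ideal_def by (metis (mono_tags, lifting) mem_Collect_eq mult.right_neutral)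
    then obtain j where j: "j < Suc n" and p: "(\<Prod>i\<in>{..<Suc n} - {j}. x i) \<in> principal_ideal ?c"
      using w nz unfolding weakly_n_absorbing_def by blast
    define p where "p = (\<Prod>i\<in>{..<Suc n} - {j}. x i)"
    have cp: "?c = x j * p" unfolding p_def using j
      by (metis finite_lessThan lessThan_iff prod.remove)
    obtain r where r: "p = ?c * r" using p unfolding principal_ideal_def p_def by auto
    have "p * (1 - x j * r) = 0" using r cp by (simp add: algebra_simps)
    moreover obtain v where "(1 - x j * r) * v = 1" using jac_unit assms(2) j by blast
    ultimately have "p = 0" by (metis mult.assoc mult.right_neutral mult_zero_left)
    then show False using cp nz by simp
  qed
next
  assume z: "(\<Prod>i<Suc n. x i) = 0"
  have pz: "principal_ideal (\<Prod>i<Suc n. x i) = {0}" unfolding z principal_ideal_def by auto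
  show "weakly_n_absorbing n (principal_ideal (\<Prod>i<Suc n. x i))"
    unfolding pz weakly_n_absorbing_def is_ideal_def by (auto, metis UNIV_I singletonD zero_neq_one)
qed

end
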